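(* Let $A$ be a $d\times d$ integer matrix of determinant $\pm1$ with $\mathrm{spec}(A)=\{1\}$, and for $k>0$ let $F^{(k)}=P(\mathrm{im}(A^k-I))\subset\mathbb Z^d$. Then $F^{(k)}=F^{(1)}$ for all $k>0$. Consequently, if $\tau$ is a twisted skew product with group component $\mathbb Z^d$ and twisting matrix $A$, then for all $k>0$ the $k$-th iterate of the Fried quotient of $\tau$ equals the Fried quotient of $\tau^k$: $(\tau_{F^{(1)}})^k=(\tau^k)_{F^{(k)}}$.
   Context: A subgroup $\Gamma\subset\mathbb Z^d$ is pure if $\mathbb Z^d/\Gamma$ is torsion-free; the purification $P(X)$ of a subset $X$ is the smallest pure subgroup containing $X$. Twisted skew product: over a countable state Markov shift $(\Sigma,\sigma)$ (bi-infinite sequences allowed by a $\{0,1\}$ transition matrix on a countable state set, $\sigma$ the left shift), $\tau(s,n)=(\sigma s,An+h(s))$ on $\Sigma\times\mathbb Z^d$ with $h$ depending only on $(s_0,s_1)$; $\tau^k$ is a twisted skew product with twisting matrix $A^k$. For an $A$-invariant subgroup $\Gamma$, $\tau_\Gamma(s,n+\Gamma)=(\sigma s,An+h(s)+\Gamma)$. The Fried quotient of a twisted skew product with twisting $\Psi$ is $\tau_F$ with $F=P(\mathrm{im}(\Psi-\mathrm{id}))$. *)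

theory Defs
  imports "HOL-Analysis.Analysis"
begin

definition mpow :: "int^'n^'n \<Rightarrow> nat \<Rightarrow> int^'n^'n" where
  "mpow A k = (((**) A) ^^ k) (mat 1)"

definition cmat :: "int^'n^'n \<Rightarrow> complex^'n^'n" where
  "cmat A = (\<chi> i j. complex_of_int (A $ i $ j))"

definition spec :: "int^'n^'n \<Rightarrow> complex set" where
  "spec A = {l. det (mat l - cmat A) = 0}"

definition subgrp :: "(int^'n) set \<Rightarrow> bool" where
  "subgrp G \<longleftrightarrow> 0 \<in> G \<and> (\<forall>x\<in>G. \<forall>y\<in>G. x - y \<in> G)"

definition pure :: "(int^'n) set \<Rightarrow> bool" where
  "pure G \<longleftrightarrow> subgrp G \<and> (\<forall>x (m::int). m \<noteq> 0 \<longrightarrow> m *s x \<in> G \<longrightarrow> x \<in> G)"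

definition purification :: "(int^'n) set \<Rightarrow> (int^'n) set" where
  "purification X = \<Inter> {G. pure G \<and> X \<subseteq> G}"

definition fried_group :: "int^'n^'n \<Rightarrow> (int^'n) set" where
  "fried_group B = purification (range (\<lambda>v. (B - mat 1) *v v))"

definition shift :: "(int \<Rightarrow> 'a) \<Rightarrow> (int \<Rightarrow> 'a)" where
  "shift s = (\<lambda>i. s (i + 1))"

definition markov_shift :: "('a \<Rightarrow> 'a \<Rightarrow> bool) \<Rightarrow> (int \<Rightarrow> 'a) set" where
  "markov_shift M = {s. \<forall>i. M (s i) (s (i + 1))}"

definition tsp :: "int^'n^'n \<Rightarrow> ('a \<Rightarrow> 'a \<Rightarrow> int^'n)
    \<Rightarrow> (int \<Rightarrow> 'a) \<times> (int^'n) \<Rightarrow> (int \<Rightarrow> 'a) \<times> (int^'n)" where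
  "tsp A h = (\<lambda>(s, n). (shift s, A *v n + h (s 0) (s 1)))"

definition coset :: "int^'n \<Rightarrow> (int^'n) set \<Rightarrow> (int^'n) set" where
  "coset n G = (\<lambda>g. n + g) ` G"

text \<open>Induced map on \<Sigma> \<times> (Z^d/G) (cosets represented as sets):
  T_G(s, n + G) = (first component of T(s,n), second component of T(s,n) + G).\<close>
definition quot_map :: "((int \<Rightarrow> 'a) \<times> (int^'n) \<Rightarrow> (int \<Rightarrow> 'a) \<times> (int^'n)) \<Rightarrow> (int^'n) set
    \<Rightarrow> (int \<Rightarrow> 'a) \<times> (int^'n) set \<Rightarrow> (int \<Rightarrow> 'a) \<times> (int^'n) set" where
  "quot_map T G = (\<lambda>(s, c). (fst (T (s, SOME x. x \<in> c)),
      {snd (T (s, x)) + g | x g. x \<in> c \<and> g \<in> G}))"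

end

theory Submission
  imports Defs
begin


definition cvec :: "int^'n \<Rightarrow> complex^'n" where
  "cvec v = (\<chi> i. complex_of_int (v $ i))"

lemma cvec_inj: "cvec v = cvec w \<Longrightarrow> v = w"
  by (simp add: cvec_def vec_eq_iff)

lemma cvec_mult: "cvec (M *v v) = cmat M *v cvec v"
  by (simp add: cvec_def cmat_def matrix_vector_mult_def vec_eq_iff)

lemma cvec_smult: "cvec (c *s v) = complex_of_int c *s cvec v"
  by (simp add: cvec_def vec_eq_iff)

lemma cmat_mult: "cmat (M ** N) = cmat M ** cmat N"
  by (simp add: cmat_def matrix_matrix_mult_def vec_eq_iff)

lemma cmat_sum: "cmat (\<Sum>j<(k::nat). f j) = (\<Sum>j<k. cmat (f j))"
  by (induction k) (simp_all add: cmat_def vec_eq_iff)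

lemma det_cmat: "det (cmat M) = complex_of_int (det M)"
  by (simp add: det_def cmat_def of_int_sum of_int_prod)

lemma mpow_Suc: "mpow A (Suc k) = A ** mpow A k"
  by (simp add: mpow_def)

lemma mpow_0: "mpow A 0 = mat 1"
  by (simp add: mpow_def)




lemma matrix_sub_rdistrib: "((A::'a::ring_1^'n^'m) - B) ** C = A ** C - B ** C"
  by (simp add: matrix_matrix_mult_def vec_eq_iff sum_subtractf left_diff_distrib)

lemma geo_factor: "mpow A k - mat 1 = (A - mat 1) ** (\<Sum>j<k. mpow A j)"
proof (induction k)
  case 0 then show ?case by (simp add: mpow_0)
next
  case (Suc k)
  have "(A - mat 1) ** (\<Sum>j<Suc k. mpow A j) = (A - mat 1) ** (\<Sum>j<k. mpow A j) + (A - mat 1) ** mpow A k"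
    by (simp add: matrix_add_ldistrib)
  also have "\<dots> = mpow A k - mat 1 + (A ** mpow A k - mpow A k)"
    using Suc by (simp add: matrix_sub_rdistrib)
  finally show ?case by (simp add: mpow_Suc)
qed

lemma mv_smult: "(A::'a::comm_ring_1^'n^'m) *v (c *s x) = c *s (A *v x)"
  by (simp add: matrix_vector_mult_def vec_eq_iff sum_distrib_left algebra_simps)

lemma int_cramer:
  fixes U :: "int^'n^'n"
  assumes "det U \<noteq> 0"
  shows "\<exists>w. U *v w = det U *s y"
proof -
  let ?C = "cmat U"
  have dC: "det ?C \<noteq> 0" using assms by (simp add: det_cmat)
  then obtain Ci where Ci: "?C ** Ci = mat 1"
    unfolding invertible_det_nz[symmetric] invertible_def by blast
  define x where "x = Ci *v cvec y"
  have Cx: "?C *v x = cvec y" using Ci by (simp add: x_def matrix_vector_mul_assoc)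
  define W where "W = (\<lambda>kk. (\<chi> i j. if j = kk then y$i else U$i$j) :: int^'n^'n)"
  define w where "w = (\<chi> kk. det (W kk))"
  have "cvec w = det ?C *s x"
  proof -
    { fix kk
      have "cmat (W kk) = (\<chi> i j. if j = kk then (?C *v x)$i else ?C$i$j)"
        by (subst Cx) (simp add: W_def cmat_def cvec_def vec_eq_iff)
      then have "det (cmat (W kk)) = x$kk * det ?C"
        using cramer_lemma[where A="?C" and k=kk and x=x] by simp
      then have "cvec w $ kk = (det ?C *s x) $ kk"
        by (simp add: cvec_def w_def det_cmat mult.commute)
    }
    then show ?thesis by (simp add: vec_eq_iff)
  qed
  then have "cvec (U *v w) = cvec (det U *s y)"
    by (simp add: cvec_mult cvec_smult Cx det_cmat mv_smult)
  then show ?thesis using cvec_inj by blast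
qed




lemma cmat_one: "cmat (mat 1) = mat 1"
  by (simp add: cmat_def mat_def vec_eq_iff)

lemma cmat_mpow: "cmat (mpow A j) *v x = ((\<lambda>v. cmat A *v v) ^^ j) x"
proof (induction j)
  case 0 then show ?case by (simp add: mpow_0 cmat_one)
next
  case (Suc j)
  then show ?case by (simp add: mpow_Suc cmat_mult matrix_vector_mul_assoc[symmetric])
qed

lemma sum_mv: "(\<Sum>j<(k::nat). M j) *v x = (\<Sum>j<k. M j *v x)"
  by (induction k) (simp_all add: matrix_vector_mult_add_rdistrib)

lemma mv_sum: "M *v (\<Sum>j<(k::nat). v j) = (\<Sum>j<k. M *v v j)"
  by (induction k) (simp_all add: matrix_vector_right_distrib)

lemma smult_sum: "(c::'a::comm_ring_1) *s (\<Sum>j<(k::nat). v j) = (\<Sum>j<k. c *s v j)"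
  by (induction k) (simp_all add: vector_ssub_ldistrib vector_add_ldistrib)

lemma sum_smult: "(\<Sum>m<(k::nat). c m) *s (v::'a::comm_ring_1^'n) = (\<Sum>m<k. c m *s v)"
  by (induction k) (simp_all add: vector_sadd_rdistrib)

definition rt :: "nat \<Rightarrow> nat \<Rightarrow> complex" where
  "rt k m = exp(2 * of_real pi * \<i> * of_nat m / of_nat k)"

lemma rt_pow: "rt k m ^ e = rt k (m * e)"
  unfolding rt_def by (simp add: exp_of_nat_mult[symmetric] algebra_simps)

lemma rt_k: "k > 0 \<Longrightarrow> rt k m ^ k = 1"
  unfolding rt_def using complex_root_unity by simp

lemma rt_1: "k > 0 \<Longrightarrow> rt k m = 1 \<longleftrightarrow> k dvd m"
  unfolding rt_def using complex_root_unity_eq_1[of k m] by simp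

lemma rt_sum: assumes "k > 0" "e < k" shows "(\<Sum>m<k. rt k m ^ e) = (if e = 0 then of_nat k else 0)"
proof (cases "e = 0")
  case True then show ?thesis by simp
next
  case False
  have "rt k m ^ e = rt k e ^ m" for m by (simp add: rt_pow mult.commute)
  moreover have "rt k e \<noteq> 1" using rt_1[OF assms(1)] False assms(2)
    using nat_dvd_not_less by auto
  ultimately show ?thesis using False by (simp add: sum_gp_strict rt_k[OF assms(1)])
qed

lemma eig_spec:
  fixes B :: "complex^'n^'n"
  assumes "B *v z = l *s z" "z \<noteq> 0"
  shows "det (mat l - B) = 0"
proof -
  have ml: "mat l *v z = l *s z"
    apply (vector matrix_vector_mult_def mat_def)
    apply (simp add: if_distrib if_distribR cong del: if_weak_cong)
    done
  have "(mat l - B) *v z = 0 *v z"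
    using assms(1) by (simp add: matrix_vector_mult_diff_rdistrib ml)
  then have "\<not> inj (\<lambda>v. (mat l - B) *v v)" using assms(2)
    by (metis inj_eq matrix_vector_mult_0 matrix_vector_mult_0_right)
  then show ?thesis
    using det_nz_iff_inj_gen[OF matrix_vector_mul_linear_gen, of "mat l - B"] by simp
qed

lemma detU_nz:
  fixes A :: "int^'n^'n"
  assumes sp: "spec A = {1}" and k: "k > 0"
  shows "det (\<Sum>j<k. mpow A j) \<noteq> 0"
proof
  assume d0: "det (\<Sum>j<k. mpow A j) = 0"
  let ?B = "cmat A"
  define f where "f = (\<lambda>v. ?B *v v)"
  have "det (cmat (\<Sum>j<k. mpow A j)) = 0" using d0 by (simp add: det_cmat)
  then have "\<not> inj (\<lambda>v. cmat (\<Sum>j<k. mpow A j) *v v)"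
    using det_nz_iff_inj_gen[OF matrix_vector_mul_linear_gen, of "cmat (\<Sum>j<k. mpow A j)"] by simp
  then obtain x1 x2 where "x1 \<noteq> x2" "cmat (\<Sum>j<k. mpow A j) *v x1 = cmat (\<Sum>j<k. mpow A j) *v x2"
    unfolding inj_def by blast
  then obtain x where x0: "x \<noteq> 0" and Ux: "cmat (\<Sum>j<k. mpow A j) *v x = 0"
    by (metis eq_iff_diff_eq_0 matrix_vector_mult_diff_distrib)
  define y where "y = (\<lambda>j. (f ^^ j) x)"
  have ySuc: "y (Suc j) = ?B *v y j" for j by (simp add: y_def f_def)
  have sumy: "(\<Sum>j<k. y j) = 0"
    using Ux by (simp add: cmat_sum sum_mv cmat_mpow y_def f_def)
  have "?B *v (\<Sum>j<k. y j) - (\<Sum>j<k. y j) = y k - y 0"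
    by (simp add: mv_sum ySuc[symmetric] sum_lessThan_telescope sum_subtractf[symmetric])
  then have yk: "y k = x" using sumy by (simp add: y_def)
  define z where "z = (\<lambda>l::complex. \<Sum>j<k. l ^ (k - Suc j) *s y j)"
  have eig: "?B *v z l = l *s z l" if lk: "l ^ k = 1" for l
  proof -
    have "l *s z l - ?B *v z l = (\<Sum>j<k. l ^ (k - j) *s y j - l ^ (k - Suc j) *s y (Suc j))"
      unfolding z_def smult_sum mv_sum mv_smult sum_subtractf[symmetric] ySuc[symmetric]
    proof (rule sum.cong[OF refl])
      fix j assume "j \<in> {..<k}"
      then have "l * l ^ (k - Suc j) = l ^ (k - j)"
        by (metis Suc_diff_Suc lessThan_iff power_Suc)
      then show "l *s (l ^ (k - Suc j) *s y j) - l ^ (k - Suc j) *s y (Suc j) =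
          l ^ (k - j) *s y j - l ^ (k - Suc j) *s y (Suc j)"
        by (simp add: vector_smult_assoc)
    qed
    also have "\<dots> = l ^ (k - 0) *s y 0 - l ^ (k - k) *s y k"
      by (rule sum_lessThan_telescope'[where f="\<lambda>j. l ^ (k - j) *s y j"])
    also have "\<dots> = 0" using lk yk by (simp add: y_def)
    finally show ?thesis by simp
  qed
  have z1: "z 1 = 0" using sumy by (simp add: z_def)
  have "\<exists>m. 0 < m \<and> m < k \<and> z (rt k m) \<noteq> 0"
  proof (rule ccontr)
    assume "\<not> ?thesis"
    then have zall: "z (rt k m) = 0" if "m < k" for m
      using that z1 by (cases "m = 0") (auto simp: rt_def)
    have "(\<Sum>m<k. z (rt k m)) = (\<Sum>j<k. (\<Sum>m<k. rt k m ^ (k - Suc j)) *s y j)"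
      unfolding z_def sum_smult by (rule sum.swap)
    also have "\<dots> = (\<Sum>j<k. (if j = k - 1 then of_nat k else 0) *s y j)"
      by (rule sum.cong[OF refl]) (use k in \<open>auto simp: rt_sum\<close>)
    also have "\<dots> = of_nat k *s y (k - 1)"
      using k by (simp add: if_distrib[of "\<lambda>c. c *s _"] sum.delta cong: if_cong)
    finally have "of_nat k *s y (k - 1) = 0" using zall by simp
    then have "y (k - 1) = 0" using k by (simp add: vec_eq_iff)
    then have "y k = 0" using ySuc[of "k - 1"] k by simp
    then show False using yk x0 by simp
  qed
  then obtain m where m: "0 < m" "m < k" "z (rt k m) \<noteq> 0" by blast
  have "det (mat (rt k m) - ?B) = 0"
    by (rule eig_spec[OF eig[OF rt_k[OF k]] m(3)])
  then have "rt k m \<in> spec A" by (simp add: spec_def)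
  then have "rt k m = 1" using sp by simp
  then show False using rt_1[OF k] m nat_dvd_not_less by blast
qed


lemma pure_0: "pure G \<Longrightarrow> 0 \<in> G" unfolding pure_def subgrp_def by simp
lemma pure_diff: "pure G \<Longrightarrow> x \<in> G \<Longrightarrow> y \<in> G \<Longrightarrow> x - y \<in> G" unfolding pure_def subgrp_def by simp
lemma pure_div: "pure G \<Longrightarrow> m \<noteq> 0 \<Longrightarrow> m *s x \<in> G \<Longrightarrow> x \<in> G" unfolding pure_def by simp
lemma pure_add: "pure G \<Longrightarrow> x \<in> G \<Longrightarrow> y \<in> G \<Longrightarrow> x + y \<in> G"
  using pure_diff[of G x "0 - y"] pure_diff[of G 0 y] pure_0[of G] by simp

lemma pure_purif: "pure (purification X)"
  unfolding pure_def subgrp_def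
proof (intro conjI)
  show "0 \<in> purification X" unfolding purification_def by (simp add: pure_0)
  show "\<forall>x\<in>purification X. \<forall>y\<in>purification X. x - y \<in> purification X"
  proof (intro ballI)
    fix x y assume "x \<in> purification X" "y \<in> purification X"
    then show "x - y \<in> purification X" unfolding purification_def
    proof (intro InterI)
      fix G assume "x \<in> \<Inter>{G. pure G \<and> X \<subseteq> G}" "y \<in> \<Inter>{G. pure G \<and> X \<subseteq> G}" "G \<in> {G. pure G \<and> X \<subseteq> G}"
      then show "x - y \<in> G" using pure_diff[of G x y] by simp
    qed
  qed
  show "\<forall>x (m::int). m \<noteq> 0 \<longrightarrow> m *s x \<in> purification X \<longrightarrow> x \<in> purification X"
  proof (intro allI impI)
    fix x and m :: int assume "m \<noteq> 0" "m *s x \<in> purification X"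
    then show "x \<in> purification X" unfolding purification_def
    proof (intro InterI)
      fix G assume "m \<noteq> 0" "m *s x \<in> \<Inter>{G. pure G \<and> X \<subseteq> G}" "G \<in> {G. pure G \<and> X \<subseteq> G}"
      then show "x \<in> G" using pure_div[of G m x] by simp
    qed
  qed
qed

lemma purif_sub: "X \<subseteq> purification X"
  unfolding purification_def by auto

lemma purif_least: "pure G \<Longrightarrow> X \<subseteq> G \<Longrightarrow> purification X \<subseteq> G"
  unfolding purification_def by auto
lemma part1:
  fixes A :: "int^'n^'n"
  assumes sp: "spec A = {1}" and k: "k > 0"
  shows "fried_group (mpow A k) = fried_group A"
proof -
  let ?N = "A - mat 1"
  define U where "U = (\<Sum>j<k. mpow A j)"
  have dU: "det U \<noteq> 0" using detU_nz[OF sp k] by (simp add: U_def)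
  have im: "range (\<lambda>v. (mpow A k - mat 1) *v v) = range (\<lambda>v. ?N *v (U *v v))"
    unfolding geo_factor U_def[symmetric] matrix_vector_mul_assoc ..
  let ?P = "purification (range (\<lambda>v. ?N *v v))"
  let ?Q = "purification (range (\<lambda>v. ?N *v (U *v v)))"
  have "range (\<lambda>v. ?N *v (U *v v)) \<subseteq> range (\<lambda>v. ?N *v v)" by auto
  then have "range (\<lambda>v. ?N *v (U *v v)) \<subseteq> ?P" using purif_sub by (rule order_trans)
  then have 1: "?Q \<subseteq> ?P"
    by (rule purif_least[OF pure_purif])
  have "range (\<lambda>v. ?N *v v) \<subseteq> ?Q"
  proof
    fix u assume "u \<in> range (\<lambda>v. ?N *v v)"
    then obtain v where u: "u = ?N *v v" by blast
    obtain w where w: "U *v w = det U *s v" using int_cramer[OF dU] by blast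
    have eq: "det U *s (?N *v v) = ?N *v (U *v w)" by (simp add: w mv_smult)
    have "?N *v (U *v w) \<in> range (\<lambda>v. ?N *v (U *v v))" by (rule rangeI)
    then have "det U *s (?N *v v) \<in> ?Q"
      unfolding eq using purif_sub by (rule subsetD[rotated])
    then show "u \<in> ?Q" unfolding u by (rule pure_div[OF pure_purif dU])
  qed
  then have 2: "?P \<subseteq> ?Q" by (rule purif_least[OF pure_purif])
  show ?thesis unfolding fried_group_def im using 1 2 by (rule subset_antisym)
qed

lemma matrix_sub_ldistrib: "(A::'a::ring_1^'n^'m) ** (B - C) = A ** B - A ** C"
  by (simp add: matrix_matrix_mult_def vec_eq_iff sum_subtractf right_diff_distrib)

lemma preimage_pure:
  assumes "pure G" shows "pure {y. (M::int^'n^'m) *v y \<in> G}"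
  unfolding pure_def subgrp_def
proof (intro conjI ballI allI impI)
  show "0 \<in> {y. M *v y \<in> G}" using pure_0[OF assms] by simp
next
  fix x y assume "x \<in> {y. M *v y \<in> G}" "y \<in> {y. M *v y \<in> G}"
  then show "x - y \<in> {y. M *v y \<in> G}"
    using pure_diff[OF assms] by (simp add: matrix_vector_mult_diff_distrib)
next
  fix x and m :: int assume "m \<noteq> 0" "m *s x \<in> {y. M *v y \<in> G}"
  then show "x \<in> {y. M *v y \<in> G}"
    using pure_div[OF assms, of m "M *v x"] by (simp add: mv_smult)
qed

lemma invariant:
  fixes A :: "int^'n^'n"
  assumes "x \<in> fried_group A"
  shows "A *v x \<in> fried_group A"
proof -
  let ?N = "A - mat 1"
  let ?X = "range (\<lambda>v. ?N *v v)"
  have comm: "A ** ?N = ?N ** A"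
    by (simp add: matrix_sub_rdistrib matrix_sub_ldistrib)
  have "?X \<subseteq> {y. A *v y \<in> purification ?X}"
  proof
    fix u assume "u \<in> ?X"
    then obtain v where u: "u = ?N *v v" by blast
    have "A *v u = ?N *v (A *v v)" by (simp add: u matrix_vector_mul_assoc comm)
    then have "A *v u \<in> ?X" by simp
    then show "u \<in> {y. A *v y \<in> purification ?X}" using purif_sub by blast
  qed
  then have "purification ?X \<subseteq> {y. A *v y \<in> purification ?X}"
    by (rule purif_least[OF preimage_pure[OF pure_purif]])
  then show ?thesis using assms unfolding fried_group_def by blast
qed

lemma invariant_pow: "x \<in> fried_group A \<Longrightarrow> mpow A k *v x \<in> fried_group A"
  by (induction k) (simp_all add: mpow_0 mpow_Suc invariant matrix_vector_mul_assoc[symmetric])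




lemma tsp_iter: "\<exists>c. \<forall>x. (tsp A h ^^ k) (s, x) = ((shift ^^ k) s, mpow A k *v x + c)"
proof (induction k)
  case 0 then show ?case by (auto simp: mpow_0)
next
  case (Suc k)
  then obtain c where c: "\<forall>x. (tsp A h ^^ k) (s, x) = ((shift ^^ k) s, mpow A k *v x + c)" by blast
  show ?case
    apply (rule exI[of _ "A *v c + h ((shift ^^ k) s 0) ((shift ^^ k) s 1)"])
    apply (simp only: funpow.simps comp_def c)
    apply (simp add: tsp_def mpow_Suc matrix_vector_right_distrib matrix_vector_mul_assoc add.assoc)
    done
qed

lemma coset_img:
  assumes G: "pure G" and inv: "\<And>g. g \<in> G \<Longrightarrow> M *v g \<in> G"
  shows "{M *v x + c + g | x g. x \<in> coset n G \<and> g \<in> G} = coset (M *v n + c) G"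
proof
  show "{M *v x + c + g | x g. x \<in> coset n G \<and> g \<in> G} \<subseteq> coset (M *v n + c) G"
  proof clarify
    fix x g assume x: "x \<in> coset n G" and g: "g \<in> G"
    then obtain f where f: "f \<in> G" "x = n + f" by (auto simp: coset_def)
    have "M *v x + c + g = (M *v n + c) + (M *v f + g)"
      by (simp add: f matrix_vector_right_distrib algebra_simps)
    moreover have "M *v f + g \<in> G" using pure_add[OF G inv[OF f(1)] g] .
    ultimately show "M *v x + c + g \<in> coset (M *v n + c) G" by (auto simp: coset_def)
  qed
  show "coset (M *v n + c) G \<subseteq> {M *v x + c + g | x g. x \<in> coset n G \<and> g \<in> G}"
  proof
    fix y assume "y \<in> coset (M *v n + c) G"
    then obtain g where g: "g \<in> G" "y = M *v n + c + g" by (auto simp: coset_def)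
    have "n \<in> coset n G" using pure_0[OF G] by (force simp: coset_def)
    then show "y \<in> {M *v x + c + g | x g. x \<in> coset n G \<and> g \<in> G}" using g by blast
  qed
qed

lemma quot_iter:
  fixes A :: "int^'n^'n"
  defines "F \<equiv> fried_group A"
  shows "(quot_map (tsp A h) F ^^ k) (s, coset n F) = ((shift ^^ k) s, coset (snd ((tsp A h ^^ k) (s, n))) F)"
proof (induction k)
  case 0 then show ?case by simp
next
  case (Suc k)
  obtain c where c: "\<forall>x. (tsp A h ^^ k) (s, x) = ((shift ^^ k) s, mpow A k *v x + c)"
    using tsp_iter by blast
  let ?s = "(shift ^^ k) s" and ?m = "mpow A k *v n + c"
  have "quot_map (tsp A h) F (?s, coset ?m F) = (shift ?s, coset (A *v ?m + h (?s 0) (?s 1)) F)"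
  proof -
    have pF: "pure F" unfolding F_def fried_group_def by (rule pure_purif)
    have inv: "\<And>g. g \<in> F \<Longrightarrow> A *v g \<in> F" unfolding F_def by (rule invariant)
    show ?thesis using coset_img[OF pF inv] by (simp add: quot_map_def tsp_def)
  qed
  then show ?case using Suc c by (simp add: tsp_def)
qed



theorem mainTheorem12:
  fixes A :: "int^'n^'n" and M :: "'a::countable \<Rightarrow> 'a \<Rightarrow> bool"
    and h :: "'a \<Rightarrow> 'a \<Rightarrow> int^'n"
  assumes "det A = 1 \<or> det A = -1"
    and "spec A = {1}"
  shows "(\<forall>k>0. fried_group (mpow A k) = fried_group A)
    \<and> (\<forall>k>0. \<forall>s\<in>markov_shift M. \<forall>n.
          (quot_map (tsp A h) (fried_group A) ^^ k) (s, coset n (fried_group A))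
        = quot_map (tsp A h ^^ k) (fried_group (mpow A k)) (s, coset n (fried_group (mpow A k))))"
proof (intro conjI allI impI ballI)
  fix k :: nat assume k: "k > 0"
  show "fried_group (mpow A k) = fried_group A" using part1[OF assms(2) k] .
next
  fix k :: nat and s n assume k: "k > 0"
  let ?F = "fried_group A"
  have eqF: "fried_group (mpow A k) = ?F" using part1[OF assms(2) k] .
  obtain c where c: "\<forall>x. (tsp A h ^^ k) (s, x) = ((shift ^^ k) s, mpow A k *v x + c)"
    using tsp_iter by blast
  have pF: "pure ?F" unfolding fried_group_def by (rule pure_purif)
  have inv: "\<And>g. g \<in> ?F \<Longrightarrow> mpow A k *v g \<in> ?F" by (rule invariant_pow)
  have "quot_map (tsp A h ^^ k) ?F (s, coset n ?F) = ((shift ^^ k) s, coset (mpow A k *v n + c) ?F)"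
    using coset_img[OF pF inv] by (simp add: quot_map_def c)
  moreover have "(quot_map (tsp A h) ?F ^^ k) (s, coset n ?F) = ((shift ^^ k) s, coset (mpow A k *v n + c) ?F)"
    using quot_iter[where A=A and h=h and k=k and s=s and n=n] c by simp
  ultimately show "(quot_map (tsp A h) ?F ^^ k) (s, coset n ?F)
        = quot_map (tsp A h ^^ k) (fried_group (mpow A k)) (s, coset n (fried_group (mpow A k)))"
    unfolding eqF by simp
qed

end
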